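(* Let $T\ge1$ and $N \ge T + \lfloor T^2/4\rfloor + 2$. In the polytope-code decoding setting described in the context, the set $V^*$ satisfies $|V^*| \ge N - T - \lfloor T^2/4\rfloor - 1$, and $\bar y_i = y_i$ for every $v_i\in V^*$. That is, the decoder identifies at least $N - T - \lfloor T^2/4 \rfloor - 1$ packets as received correctly, and all packets so identified are indeed correct.
   Context: Let $N_0\ge1$. An eligible $(N,N-T)$-generator matrix is an $N\times(N-T)$ matrix $A=(A_{ij})$ with nonnegative integer entries whose first $N-T$ rows form the identity matrix and such that every $(N-T)\times(N-T)$ submatrix obtained by choosing $N-T$ rows is nonsingular. Given $x_1,\dots,x_{N-T}\in\mathbb{Z}^{N_0}$, the transmitted codewords are $y_i = \sum_{j=1}^{N-T} A_{ij} x_j$, $i\in[N]$. The decoder receives $\bar y_1,\dots,\bar y_N\in\mathbb{Z}^{N_0}$ with $\bar y_i = y_i$ for all $i$ outside some unknown set of at most $T$ indices, and knows exactly $F_{ij}=\langle y_i,y_j\rangle$ for all $i,j\in[N]$ (in the code, the inner products $\langle x_i,x_j\rangle$ are included in every packet and recovered by majority). The syndrome graph $G$ has vertices $v_1,\dots,v_N$; for $i\ne j$, $v_i$ and $v_j$ are adjacent iff $\langle\bar y_i,\bar y_j\rangle=F_{ij}$; $v_i$ has a self-loop iff $\langle\bar y_i,\bar y_i\rangle = F_{ii}$. $\hat G$ is $G$ with all vertices lacking a self-loop deleted. $V'$ is the set of vertices of $\hat G$ lying in a clique (pairwise adjacent distinct vertices) of size at least $N-T$ in $\hat G$. $V^*$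 is the set of $v_i\in V'$ adjacent in $\hat G$ to every vertex of $V'$ (including itself via its self-loop). *)

theory Defs
  imports Main "Jordan_Normal_Form.Determinant"
begin

text \<open>Vectors in Z^N0 are represented as functions nat => int; only the components
  k < N0 are relevant. Indices of packets are 0..N-1, message indices 0..N-T-1.\<close>

definition ip :: "nat \<Rightarrow> (nat \<Rightarrow> int) \<Rightarrow> (nat \<Rightarrow> int) \<Rightarrow> int" where
  "ip N0 u v = (\<Sum>k<N0. u k * v k)"

definition row_submatrix :: "(nat \<Rightarrow> nat \<Rightarrow> int) \<Rightarrow> nat \<Rightarrow> nat set \<Rightarrow> int mat" where
  "row_submatrix A K S = mat K K (\<lambda>(r, c). A (sorted_list_of_set S ! r) c)"

definition eligible_generator :: "nat \<Rightarrow> nat \<Rightarrow> (nat \<Rightarrow> nat \<Rightarrow> int) \<Rightarrow> bool" where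
  "eligible_generator N T A \<longleftrightarrow>
     T \<le> N \<and>
     (\<forall>i<N. \<forall>j<N - T. A i j \<ge> 0) \<and>
     (\<forall>i<N - T. \<forall>j<N - T. A i j = (if i = j then 1 else 0)) \<and>
     (\<forall>S. S \<subseteq> {..<N} \<and> card S = N - T \<longrightarrow> det (row_submatrix A (N - T) S) \<noteq> 0)"

definition codeword :: "nat \<Rightarrow> (nat \<Rightarrow> nat \<Rightarrow> int) \<Rightarrow> (nat \<Rightarrow> nat \<Rightarrow> int) \<Rightarrow> nat \<Rightarrow> nat \<Rightarrow> int" where
  "codeword K A x i = (\<lambda>k. \<Sum>j<K. A i j * x j k)"

text \<open>Syndrome graph: adjacency (for i \<noteq> j) / self-loop (for i = j).\<close>
definition sadj :: "nat \<Rightarrow> (nat \<Rightarrow> nat \<Rightarrow> int) \<Rightarrow> (nat \<Rightarrow> nat \<Rightarrow> int) \<Rightarrow> nat \<Rightarrow> nat \<Rightarrow> bool" where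
  "sadj N0 y ybar i j \<longleftrightarrow> ip N0 (ybar i) (ybar j) = ip N0 (y i) (y j)"

definition hatV :: "nat \<Rightarrow> nat \<Rightarrow> (nat \<Rightarrow> nat \<Rightarrow> int) \<Rightarrow> (nat \<Rightarrow> nat \<Rightarrow> int) \<Rightarrow> nat set" where
  "hatV N N0 y ybar = {i. i < N \<and> sadj N0 y ybar i i}"

definition is_clique :: "nat \<Rightarrow> nat \<Rightarrow> (nat \<Rightarrow> nat \<Rightarrow> int) \<Rightarrow> (nat \<Rightarrow> nat \<Rightarrow> int) \<Rightarrow> nat set \<Rightarrow> bool" where
  "is_clique N N0 y ybar C \<longleftrightarrow> C \<subseteq> hatV N N0 y ybar \<and>
     (\<forall>i\<in>C. \<forall>j\<in>C. i \<noteq> j \<longrightarrow> sadj N0 y ybar i j)"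

definition Vprime :: "nat \<Rightarrow> nat \<Rightarrow> nat \<Rightarrow> (nat \<Rightarrow> nat \<Rightarrow> int) \<Rightarrow> (nat \<Rightarrow> nat \<Rightarrow> int) \<Rightarrow> nat set" where
  "Vprime N T N0 y ybar = {i \<in> hatV N N0 y ybar.
     \<exists>C. is_clique N N0 y ybar C \<and> card C \<ge> N - T \<and> i \<in> C}"

definition Vstar :: "nat \<Rightarrow> nat \<Rightarrow> nat \<Rightarrow> (nat \<Rightarrow> nat \<Rightarrow> int) \<Rightarrow> (nat \<Rightarrow> nat \<Rightarrow> int) \<Rightarrow> nat set" where
  "Vstar N T N0 y ybar = {i \<in> Vprime N T N0 y ybar.
     \<forall>j \<in> Vprime N T N0 y ybar. sadj N0 y ybar i j}"

end

theory Submission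
  imports Defs
begin

lemma LA:
  assumes elig: "eligible_generator N T A" and S: "S \<subseteq> {..<N}" "card S = N - T"
    and orth: "\<forall>h\<in>S. (\<Sum>k<N0. z k * codeword (N-T) A x h k) = 0"
  shows "\<forall>j<N-T. (\<Sum>k<N0. z k * x j k) = 0"
proof -
  let ?K = "N - T"
  let ?R = "row_submatrix A ?K S"
  let ?l = "sorted_list_of_set S"
  define v where "v = vec ?K (\<lambda>j. \<Sum>k<N0. z k * x j k)"
  have fin: "finite S" using S(1) finite_subset by blast
  have R: "?R \<in> carrier_mat ?K ?K" unfolding row_submatrix_def by simp
  have det: "det ?R \<noteq> 0" using elig S unfolding eligible_generator_def by blast
  have mem: "?l ! r \<in> S" if "r < ?K" for r
  proof -
    have "length ?l = ?K" using fin S(2) by simp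
    hence "?l ! r \<in> set ?l" using that by simp
    thus ?thesis using fin by simp
  qed
  have "?R *\<^sub>v v = 0\<^sub>v ?K"
  proof (rule eq_vecI)
    fix r assume r: "r < dim_vec (0\<^sub>v ?K :: int vec)"
    hence r': "r < ?K" by simp
    have "(?R *\<^sub>v v) $ r = (\<Sum>j<?K. A (?l ! r) j * (\<Sum>k<N0. z k * x j k))"
      using r' unfolding row_submatrix_def v_def
      by (simp add: scalar_prod_def row_def atLeast0LessThan)
    also have "\<dots> = (\<Sum>k<N0. z k * codeword ?K A x (?l ! r) k)"
    proof -
      have "(\<Sum>j<?K. A (?l ! r) j * (\<Sum>k<N0. z k * x j k)) = (\<Sum>j<?K. \<Sum>k<N0. z k * (A (?l ! r) j * x j k))"
        by (simp add: sum_distrib_left mult_ac)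
      also have "\<dots> = (\<Sum>k<N0. \<Sum>j<?K. z k * (A (?l ! r) j * x j k))" by (rule sum.swap)
      also have "\<dots> = (\<Sum>k<N0. z k * codeword ?K A x (?l ! r) k)" by (simp add: codeword_def sum_distrib_left)
      finally show ?thesis .
    qed
    also have "\<dots> = 0" using orth mem[OF r'] by blast
    finally show "(?R *\<^sub>v v) $ r = 0\<^sub>v ?K $ r" using r' by simp
  qed (simp add: row_submatrix_def)
  moreover have "v \<in> carrier_vec ?K" unfolding v_def by simp
  moreover have "\<not> (\<exists>w. w \<in> carrier_vec ?K \<and> w \<noteq> 0\<^sub>v ?K \<and> ?R *\<^sub>v w = 0\<^sub>v ?K)"
    using det_0_iff_vec_prod_zero[OF R] det by simp
  ultimately have "v = 0\<^sub>v ?K" by auto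
  show ?thesis
  proof (intro allI impI)
    fix j assume j: "j < ?K"
    have "v $ j = 0" using \<open>v = 0\<^sub>v ?K\<close> j by simp
    thus "(\<Sum>k<N0. z k * x j k) = 0" using j unfolding v_def by simp
  qed
qed



lemma greedy:
  fixes U W :: "'a \<Rightarrow> 'b set" and D :: "'a \<Rightarrow> 'a set"
  assumes M: "finite M"
    and Wf: "\<And>c. c \<in> M \<Longrightarrow> finite (W c)"
    and D: "\<And>c. c \<in> M \<Longrightarrow> D c \<subseteq> M \<and> c \<in> D c"
    and Wc: "\<And>c. c \<in> M \<Longrightarrow> card (W c) \<le> s + card (D c)"
    and UW: "\<And>c c'. c \<in> M \<Longrightarrow> c' \<in> D c \<Longrightarrow> U c' \<subseteq> W c"
    and Uc: "\<And>c. c \<in> M \<Longrightarrow> s + 1 \<le> card (U c)"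
    and Dd: "\<And>c. c \<in> M \<Longrightarrow> card (D c) \<le> d"
    and mx1: "s + 1 \<le> mx" and mx2: "d - 1 \<le> mx"
  shows "R \<subseteq> M \<Longrightarrow> (\<And>c. c \<in> M - R \<Longrightarrow> U c \<subseteq> Y) \<Longrightarrow> card ((\<Union>c\<in>R. U c) - Y) \<le> card R * mx"
proof (induction "card R" arbitrary: R Y rule: less_induct)
  case less
  have Uf: "finite (U c)" if cM: "c \<in> M" for c
  proof -
    have "U c \<subseteq> W c" using UW[OF cM] D[OF cM] by blast
    thus ?thesis using Wf[OF cM] finite_subset by blast
  qed
  show ?case
  proof (cases "R = {}")
    case True then show ?thesis by simp
  next
    case False
    then obtain c where cR: "c \<in> R" by blast
    have cM: "c \<in> M" using cR less.prems(1) by blast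
    define R' where "R' = R - D c"
    define Y' where "Y' = Y \<union> W c"
    have finR: "finite R" using less.prems(1) M finite_subset by blast
    have cardR': "card R' = card R - card (R \<inter> D c)" unfolding R'_def
      by (rule card_Diff_subset_Int) (simp add: finR)
    have RDc: "c \<in> R \<inter> D c" using cR D[OF cM] by blast
    have "card (R \<inter> D c) \<noteq> 0" using RDc finR by auto
    hence c1: "1 \<le> card (R \<inter> D c)" by linarith
    have c2: "card (R \<inter> D c) \<le> card R" using finR by (simp add: card_mono)
    have lt: "card R' < card R" using cardR' c1 c2 by linarith
    have IH: "card ((\<Union>c\<in>R'. U c) - Y') \<le> card R' * mx"
    proof (rule less.hyps[OF lt])
      show "R' \<subseteq> M" using less.prems(1) R'_def by blast
    next
      fix c' assume c': "c' \<in> M - R'"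
      show "U c' \<subseteq> Y'"
      proof (cases "c' \<in> R")
        case True
        then have "c' \<in> D c" using c' R'_def by blast
        then show ?thesis using UW[OF cM] Y'_def by blast
      next
        case False
        then show ?thesis using less.prems(2) c' Y'_def by blast
      qed
    qed
    have sub: "(\<Union>c\<in>R. U c) - Y \<subseteq> (W c - Y) \<union> ((\<Union>c\<in>R'. U c) - Y')"
    proof
      fix h assume h: "h \<in> (\<Union>c\<in>R. U c) - Y"
      then obtain e where e: "e \<in> R" "h \<in> U e" "h \<notin> Y" by blast
      show "h \<in> (W c - Y) \<union> ((\<Union>c\<in>R'. U c) - Y')"
      proof (cases "h \<in> W c")
        case True then show ?thesis using e by blast
      next
        case False
        have "e \<notin> D c" using False UW[OF cM] e(2) by blast
        then have "e \<in> R'" using e(1) R'_def by blast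
        then show ?thesis using e False Y'_def by blast
      qed
    qed
    have finU: "finite (\<Union>c\<in>R'. U c)" using Uf finR R'_def less.prems(1) by auto
    have "card ((\<Union>c\<in>R. U c) - Y) \<le> card ((W c - Y) \<union> ((\<Union>c\<in>R'. U c) - Y'))"
      using sub Wf[OF cM] finU by (intro card_mono) auto
    also have "\<dots> \<le> card (W c - Y) + card ((\<Union>c\<in>R'. U c) - Y')"
      by (rule card_Un_le)
    also have "card (W c - Y) \<le> card (R \<inter> D c) * mx"
    proof (cases "D c \<subseteq> R")
      case True
      then have eq: "R \<inter> D c = D c" by blast
      have "card (W c - Y) \<le> card (W c)" using Wf[OF cM] by (simp add: card_mono)
      also have "\<dots> \<le> s + card (D c)" using Wc[OF cM] .
      also have "\<dots> \<le> card (D c) * (s + 1)"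
      proof -
        have "1 \<le> card (D c)" using c1 eq by simp
        hence "1 * s \<le> card (D c) * s" by (rule mult_le_mono1)
        then show ?thesis by simp
      qed
      also have "\<dots> \<le> card (D c) * mx" using mx1 by (rule mult_le_mono2)
      finally show ?thesis using eq by simp
    next
      case False
      then obtain c' where c': "c' \<in> D c" "c' \<notin> R" by blast
      have c'M: "c' \<in> M" using c' D[OF cM] by blast
      have UY: "U c' \<subseteq> Y" using less.prems(2) c'M c' by blast
      have UWc: "U c' \<subseteq> W c" using UW[OF cM c'(1)] .
      have "card (W c - Y) \<le> card (W c - U c')" using UY Wf[OF cM] by (intro card_mono) auto
      also have "\<dots> = card (W c) - card (U c')" using UWc Uf[OF c'M] by (simp add: card_Diff_subset)
      also have "\<dots> \<le> d - 1" using Wc[OF cM] Uc[OF c'M] Dd[OF cM] by linarith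
      also have "\<dots> \<le> mx" using mx2 .
      also have "\<dots> \<le> card (R \<inter> D c) * mx" using c1 by simp
      finally show ?thesis .
    qed
    finally have "card ((\<Union>c\<in>R. U c) - Y) \<le> card (R \<inter> D c) * mx + card R' * mx"
      using IH by linarith
    also have "\<dots> = (card (R \<inter> D c) + card R') * mx" by (rule add_mult_distrib[symmetric])
    finally have fin: "card ((\<Union>c\<in>R. U c) - Y) \<le> (card (R \<inter> D c) + card R') * mx" .
    have e: "card (R \<inter> D c) + card R' = card R" using cardR' c2 by linarith
    show ?thesis using fin by (simp only: e)
  qed
qed


lemma amgm: fixes u v :: nat shows "4 * (u * v) \<le> (u + v)^2"
proof -
  have "(int u - int v)^2 \<ge> 0" by simp
  hence "4 * (int u * int v) \<le> (int u + int v)^2" by (simp add: power2_eq_square algebra_simps)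
  thus ?thesis by (metis of_nat_add of_nat_le_iff of_nat_mult of_nat_numeral of_nat_power)
qed

lemma prod_bound: fixes u v T :: nat assumes "u + v \<le> T" shows "u * v \<le> T^2 div 4"
proof -
  have "4 * (u * v) \<le> T^2" using amgm[of u v] power_mono[OF assms, of 2] by linarith
  hence "(4 * (u * v)) div 4 \<le> T^2 div 4" by (rule div_le_mono)
  thus ?thesis by simp
qed

lemma arith_bound:
  fixes b m d T :: nat
  assumes "m \<le> b" "b \<le> T" "1 \<le> d" "d \<le> m"
  shows "(d - 1) + (m - d) * max (T - b + 1) (d - 1) \<le> T^2 div 4"
proof (cases "d - 1 \<le> T - b + 1")
  case True
  then have "(d - 1) + (m - d) * max (T - b + 1) (d - 1) = (d - 1) + (m - d) * (T - b + 1)" by simp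
  also have "\<dots> \<le> (d - 1) * (T - b + 1) + (m - d) * (T - b + 1)" by simp
  also have "\<dots> = ((d - 1) + (m - d)) * (T - b + 1)" by (simp only: add_mult_distrib)
  also have "\<dots> = (m - 1) * (T - b + 1)"
  proof -
    have e: "(d - 1) + (m - d) = m - 1" using assms by linarith
    show ?thesis by (simp only: e)
  qed
  also have "\<dots> \<le> (b - 1) * (T - b + 1)" by (rule mult_le_mono1) (use assms in linarith)
  also have "\<dots> \<le> T^2 div 4" by (rule prod_bound) (use assms in linarith)
  finally show ?thesis .
next
  case False
  then have "(d - 1) + (m - d) * max (T - b + 1) (d - 1) = (d - 1) * (m - d + 1)" by (simp add: algebra_simps)
  also have "\<dots> \<le> T^2 div 4" by (rule prod_bound) (use assms in linarith)
  finally show ?thesis .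
qed


lemma ip_sym: "ip N0 u v = ip N0 v u" unfolding ip_def by (simp add: mult.commute)

theorem theorem2:
  fixes N T N0 :: nat
    and A :: "nat \<Rightarrow> nat \<Rightarrow> int"
    and x :: "nat \<Rightarrow> nat \<Rightarrow> int"
    and ybar :: "nat \<Rightarrow> nat \<Rightarrow> int"
    and E :: "nat set"
  assumes "N0 \<ge> 1"
    and "T \<ge> 1"
    and "N \<ge> T + T^2 div 4 + 2"
    and "eligible_generator N T A"
    and "E \<subseteq> {..<N}" and "card E \<le> T"
    and "\<forall>i<N. i \<notin> E \<longrightarrow> (\<forall>k<N0. ybar i k = codeword (N - T) A x i k)"
  shows "card (Vstar N T N0 (codeword (N - T) A x) ybar) \<ge> N - T - T^2 div 4 - 1
       \<and> (\<forall>i \<in> Vstar N T N0 (codeword (N - T) A x) ybar.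
             \<forall>k<N0. ybar i k = codeword (N - T) A x i k)"
proof -
  define K where "K = N - T"
  define y where "y = codeword (N - T) A x"
  define B where "B = {i. i < N \<and> \<not> (\<forall>k<N0. ybar i k = y i k)}"
  define G where "G = {..<N} - B"
  define V' where "V' = Vprime N T N0 y ybar"
  define Vs where "Vs = Vstar N T N0 y ybar"
  have BE: "B \<subseteq> E" using assms(7) unfolding B_def y_def by auto
  have finE: "finite E" using assms(5) finite_subset by blast
  have finB: "finite B" using BE finE finite_subset by blast
  have cardB: "card B \<le> T" using card_mono[OF finE BE] assms(6) by linarith
  have BN: "B \<subseteq> {..<N}" unfolding B_def by auto
  have cardG: "card G = N - card B" unfolding G_def using card_Diff_subset[OF finB BN] by simp
  have finG: "finite G" unfolding G_def by simp
  have TN: "T \<le> N" using assms(3) by simp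
  have KG: "K \<le> card G" using cardG cardB K_def TN by linarith
  have good: "\<And>h k. h \<in> G \<Longrightarrow> k < N0 \<Longrightarrow> ybar h k = y h k" unfolding G_def B_def by auto
  have ipgood: "\<And>h u. h \<in> G \<Longrightarrow> ip N0 u (ybar h) = ip N0 u (y h)"
    unfolding ip_def using good by (auto intro: sum.cong)
  have ipgood2: "ip N0 (ybar h) u = ip N0 (y h) u" if "h \<in> G" for h u
    using ipgood[OF that, of u] ip_sym[of N0 "ybar h" u] ip_sym[of N0 "y h" u] by simp
  have sadj_sym: "sadj N0 y ybar i j = sadj N0 y ybar j i" for i j
    unfolding sadj_def using ip_sym[of N0 "ybar i" "ybar j"] ip_sym[of N0 "y i" "y j"] by simp
  have sadjGG: "\<And>i h. i \<in> G \<Longrightarrow> h \<in> G \<Longrightarrow> sadj N0 y ybar i h"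
    unfolding sadj_def using ipgood ipgood2 by simp
  have GN: "G \<subseteq> {..<N}" unfolding G_def by blast
  have G_hat: "G \<subseteq> hatV N N0 y ybar" unfolding hatV_def using sadjGG GN by blast
  have G_clique: "is_clique N N0 y ybar G" unfolding is_clique_def using G_hat sadjGG by blast
  have G_V': "G \<subseteq> V'" unfolding V'_def Vprime_def using G_hat G_clique KG K_def by blast
  have V'hat: "V' \<subseteq> hatV N N0 y ybar" unfolding V'_def Vprime_def by blast
  have hatN: "hatV N N0 y ybar \<subseteq> {..<N}" unfolding hatV_def by blast
  have LA2: "\<forall>k<N0. ybar i k = y i k"
    if i: "i < N" "sadj N0 y ybar i i" and S: "S \<subseteq> G" "K \<le> card S"
      and adj: "\<forall>h\<in>S. sadj N0 y ybar i h" for i S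
  proof -
    have finS: "finite S" using S(1) finG finite_subset by blast
    obtain S' where S': "S' \<subseteq> S" "card S' = K" using S(2) obtain_subset_with_card_n by metis
    define z where "z k = ybar i k - y i k" for k
    have orth: "\<forall>h\<in>S'. (\<Sum>k<N0. z k * codeword (N-T) A x h k) = 0"
    proof
      fix h assume h: "h \<in> S'"
      hence hG: "h \<in> G" using S S' by blast
      have "ip N0 (ybar i) (ybar h) = ip N0 (y i) (y h)"
        using adj h S' unfolding sadj_def by blast
      hence "ip N0 (ybar i) (y h) = ip N0 (y i) (y h)"
        using ipgood[OF hG, of "ybar i"] by simp
      hence "(\<Sum>k<N0. ybar i k * y h k - y i k * y h k) = 0"
        unfolding ip_def by (simp add: sum_subtractf)
      thus "(\<Sum>k<N0. z k * codeword (N-T) A x h k) = 0"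
        unfolding z_def y_def by (simp add: algebra_simps)
    qed
    have zx: "\<forall>j<N-T. (\<Sum>k<N0. z k * x j k) = 0"
      by (rule LA[OF assms(4) _ _ orth]) (use S' S GN K_def in auto)
    have zy: "(\<Sum>k<N0. z k * y i k) = 0"
    proof -
      have "(\<Sum>k<N0. z k * y i k) = (\<Sum>k<N0. \<Sum>j<N-T. z k * (A i j * x j k))"
        unfolding y_def codeword_def by (simp add: sum_distrib_left)
      also have "\<dots> = (\<Sum>j<N-T. \<Sum>k<N0. z k * (A i j * x j k))" by (rule sum.swap)
      also have "\<dots> = (\<Sum>j<N-T. A i j * (\<Sum>k<N0. z k * x j k))"
        by (simp add: sum_distrib_left mult_ac)
      also have "\<dots> = 0" using zx by simp
      finally show ?thesis .
    qed
    have self: "(\<Sum>k<N0. ybar i k * ybar i k) = (\<Sum>k<N0. y i k * y i k)"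
      using i(2) unfolding sadj_def ip_def .
    have "(\<Sum>k<N0. z k * z k) = (\<Sum>k<N0. ybar i k * ybar i k - y i k * y i k - 2 * (z k * y i k))"
      unfolding z_def by (intro sum.cong) (auto simp: algebra_simps)
    also have "\<dots> = 0" using self zy by (simp add: sum_subtractf sum_distrib_left[symmetric])
    finally have zz: "(\<Sum>k<N0. z k * z k) = 0" .
    have "\<forall>k\<in>{..<N0}. z k * z k = 0"
      using zz by (subst sum_nonneg_eq_0_iff[symmetric]) auto
    thus ?thesis unfolding z_def by simp
  qed
  have part2: "\<forall>i \<in> Vs. \<forall>k<N0. ybar i k = y i k"
  proof
    fix i assume iV: "i \<in> Vs"
    hence iV': "i \<in> V'" and adj: "\<forall>j\<in>V'. sadj N0 y ybar i j"
      unfolding Vs_def Vstar_def V'_def by auto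
    have "i \<in> hatV N N0 y ybar" using iV' V'hat by blast
    hence i: "i < N" "sadj N0 y ybar i i" unfolding hatV_def by auto
    show "\<forall>k<N0. ybar i k = y i k"
      by (rule LA2[OF i order_refl KG]) (use adj G_V' in blast)
  qed
  define M where "M = B \<inter> V'"
  have finM: "finite M" unfolding M_def using finB by simp
  have clq: "\<exists>C. is_clique N N0 y ybar C \<and> K \<le> card C \<and> c \<in> C" if "c \<in> M" for c
    using that unfolding M_def V'_def Vprime_def K_def by blast
  define C where "C c = (SOME C. is_clique N N0 y ybar C \<and> K \<le> card C \<and> c \<in> C)" for c
  have C: "is_clique N N0 y ybar (C c) \<and> K \<le> card (C c) \<and> c \<in> C c" if "c \<in> M" for c
    unfolding C_def using someI_ex[OF clq[OF that]] .
  define D where "D c = C c \<inter> B" for c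
  define W where "W c = G - C c" for c
  define U where "U c = {h \<in> G. \<not> sadj N0 y ybar c h}" for c
  define s where "s = card G - K"
  have CN: "C c \<subseteq> {..<N}" if "c \<in> M" for c
    using C[OF that] hatN unfolding is_clique_def by blast
  have Wf: "finite (W c)" for c unfolding W_def using finG by simp
  have Dprop: "D c \<subseteq> M \<and> c \<in> D c" if cM: "c \<in> M" for c
  proof
    show "D c \<subseteq> M"
    proof
      fix e assume e: "e \<in> D c"
      have "e \<in> V'" unfolding V'_def Vprime_def using C[OF cM] e D_def K_def
        unfolding is_clique_def by blast
      thus "e \<in> M" using e D_def M_def by blast
    qed
    show "c \<in> D c" using C[OF cM] cM unfolding D_def M_def by blast
  qed
  have Wc: "card (W c) \<le> s + card (D c)" if cM: "c \<in> M" for c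
  proof -
    have finC: "finite (C c)" using CN[OF cM] finite_subset by blast
    have split: "C c = D c \<union> (C c \<inter> G)" using CN[OF cM] unfolding D_def G_def by blast
    have disj: "D c \<inter> (C c \<inter> G) = {}" unfolding D_def G_def by blast
    have "card (C c) = card (D c) + card (C c \<inter> G)"
      using card_Un_disjoint[of "D c" "C c \<inter> G"] finC disj split D_def by simp
    moreover have "card (W c) = card G - card (C c \<inter> G)"
      unfolding W_def using finG by (simp add: card_Diff_subset_Int Int_commute)
    ultimately show ?thesis using C[OF cM] KG s_def by linarith
  qed
  have UW: "U c' \<subseteq> W c" if cM: "c \<in> M" and c': "c' \<in> D c" for c c'
  proof
    fix h assume h: "h \<in> U c'"
    hence hG: "h \<in> G" and na: "\<not> sadj N0 y ybar c' h" unfolding U_def by auto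
    have clqc: "\<forall>i\<in>C c. \<forall>j\<in>C c. i \<noteq> j \<longrightarrow> sadj N0 y ybar i j"
      using C[OF cM] unfolding is_clique_def by (elim conjE)
    have c'C: "c' \<in> C c" and c'B: "c' \<in> B" using c' unfolding D_def by auto
    have hc': "h \<noteq> c'" using hG c'B unfolding G_def by blast
    have "h \<notin> C c"
    proof
      assume hC: "h \<in> C c"
      have "sadj N0 y ybar c' h" using clqc c'C hC hc' by metis
      thus False using na by simp
    qed
    thus "h \<in> W c" using hG W_def by blast
  qed
  have Uc: "s + 1 \<le> card (U c)" if cM: "c \<in> M" for c
  proof -
    define Sc where "Sc = {h \<in> G. sadj N0 y ybar c h}"
    have "c \<in> hatV N N0 y ybar" using cM V'hat M_def by blast
    hence ci: "c < N" "sadj N0 y ybar c c" unfolding hatV_def by auto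
    have cB: "c \<in> B" using cM M_def by blast
    have "card Sc < K"
    proof (rule ccontr)
      assume "\<not> card Sc < K"
      hence "\<forall>k<N0. ybar c k = y c k"
        by (intro LA2[OF ci, of Sc]) (auto simp: Sc_def)
      thus False using cB B_def by blast
    qed
    moreover have "U c = G - Sc" unfolding U_def Sc_def by blast
    moreover have "card (G - Sc) = card G - card Sc"
      using finG by (simp add: card_Diff_subset Sc_def)
    ultimately have "card (U c) = card G - card Sc" "card Sc < K" by simp_all
    thus ?thesis using s_def KG by linarith
  qed
  have DB: "card (D c) \<le> card B" for c unfolding D_def using finB by (simp add: card_mono)
  define UU where "UU = (\<Union>c\<in>M. U c)"
  have VsG: "G - UU \<subseteq> Vs"
  proof
    fix h assume h: "h \<in> G - UU"
    hence hG: "h \<in> G" by blast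
    have "\<forall>j\<in>V'. sadj N0 y ybar h j"
    proof
      fix j assume j: "j \<in> V'"
      show "sadj N0 y ybar h j"
      proof (cases "j \<in> B")
        case True
        hence "j \<in> M" using j M_def by blast
        hence "h \<notin> U j" using h UU_def by blast
        hence "sadj N0 y ybar j h" using hG U_def by blast
        thus ?thesis using sadj_sym by blast
      next
        case False
        hence "j \<in> G" using j V'hat hatN G_def by blast
        thus ?thesis using sadjGG hG by blast
      qed
    qed
    thus "h \<in> Vs" unfolding Vs_def Vstar_def using G_V' hG V'_def by blast
  qed
  have "Vs \<subseteq> {..<N}" unfolding Vs_def Vstar_def using V'hat hatN V'_def by blast
  hence finVs: "finite Vs" using finite_subset by blast
  have cardVs: "card G - card UU \<le> card Vs"
  proof -
    have "UU \<subseteq> G" unfolding UU_def U_def by blast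
    hence finUU: "finite UU" using finG finite_subset by blast
    have "card G - card UU \<le> card (G - UU)" by (rule diff_card_le_card_Diff) (rule finUU)
    also have "\<dots> \<le> card Vs" using card_mono[OF finVs VsG] .
    finally show ?thesis .
  qed
  have part1: "N - T - T^2 div 4 - 1 \<le> card Vs"
  proof (cases "M = {}")
    case True
    hence "UU = {}" unfolding UU_def by simp
    thus ?thesis using cardVs cardG cardB by simp
  next
    case False
    define d where "d = Max ((\<lambda>c. card (D c)) ` M)"
    have "d \<in> (\<lambda>c. card (D c)) ` M" unfolding d_def using finM False by (intro Max_in) auto
    then obtain cs where cs: "cs \<in> M" "card (D cs) = d" by force
    have Dd: "card (D c) \<le> d" if "c \<in> M" for c
      unfolding d_def using finM that by (intro Max_ge) auto
    define mx where "mx = max (s + 1) (d - 1)"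
    define R where "R = M - D cs"
    have gr: "card ((\<Union>c\<in>R. U c) - W cs) \<le> card R * mx"
      by (rule greedy[of M W D s U d mx R "W cs"])
         (use finM Wf Dprop Wc UW Uc Dd R_def Dprop[OF cs(1)] UW[OF cs(1)] in \<open>auto simp: mx_def\<close>)
    have UUsub: "UU \<subseteq> W cs \<union> ((\<Union>c\<in>R. U c) - W cs)"
      unfolding UU_def R_def using UW[OF cs(1)] by blast
    have finU2: "finite ((\<Union>c\<in>R. U c) - W cs)"
      using finG unfolding U_def by (auto intro: finite_subset)
    have "card UU \<le> card (W cs) + card ((\<Union>c\<in>R. U c) - W cs)"
      by (rule order_trans[OF card_mono[OF _ UUsub] card_Un_le]) (use Wf finU2 in auto)
    also have "\<dots> \<le> (s + d) + card R * mx" using Wc[OF cs(1)] cs(2) gr by linarith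
    finally have cU: "card UU \<le> s + d + card R * mx" .
    have DcsM: "D cs \<subseteq> M" using Dprop[OF cs(1)] by blast
    have cR: "card R = card M - d" unfolding R_def
      using card_Diff_subset[OF finite_subset[OF DcsM finM] DcsM] cs(2) by simp
    have mB: "card M \<le> card B" unfolding M_def using finB by (simp add: card_mono)
    have "finite (D cs)" using finB D_def by simp
    hence "card (D cs) \<noteq> 0" using Dprop[OF cs(1)] by auto
    hence d1: "1 \<le> d" using cs(2) by linarith
    have dM: "d \<le> card M" using card_mono[OF finM conjunct1[OF Dprop[OF cs(1)]]] cs(2) by simp
    have sb: "s = T - card B" using s_def cardG K_def cardB TN by linarith
    have ab: "(d - 1) + (card M - d) * max (T - card B + 1) (d - 1) \<le> T^2 div 4"
      by (rule arith_bound) (use mB cardB d1 dM in auto)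
    have "card UU \<le> T - card B + 1 + ((d - 1) + (card M - d) * mx)"
      using cU cR d1 sb by simp
    also have "(d - 1) + (card M - d) * mx \<le> T^2 div 4" using ab sb mx_def by simp
    finally have "card UU \<le> T - card B + 1 + T^2 div 4" by simp
    thus ?thesis using cardVs cardG cardB assms(3) by linarith
  qed
  show ?thesis using part1 part2 unfolding Vs_def y_def by blast
qed


end
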